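(* Let $G$ be an innately transitive permutation group on a finite set $\Omega$ with plinth $M$, and fix $\omega\in\Omega$. For a $G$-invariant Cartesian decomposition $\mathcal E=\{\Gamma_1,\ldots,\Gamma_\ell\}$ of $\Omega$, let $\gamma_i\in\Gamma_i$ be the part containing $\omega$ and set $K_i=M_{\gamma_i}$ (the setwise stabiliser in $M$). Then $\{K_1,\ldots,K_\ell\}$ is a Cartesian system of subgroups in $M$ with respect to $\omega$, and the map $\mathcal E\mapsto\{K_1,\ldots,K_\ell\}$ is a bijection between the set of $G$-invariant Cartesian decompositions of $\Omega$ and the set of Cartesian systems of subgroups in $M$ with respect to $\omega$.
   Context: A Cartesian decomposition of a finite set $\Omega$ is a set $\mathcal E=\{\Gamma_1,\ldots,\Gamma_\ell\}$ of partitions of $\Omega$ such that $|\gamma_1\cap\cdots\cap\gamma_\ell|=1$ for all $\gamma_1\in\Gamma_1,\ldots,\gamma_\ell\in\Gamma_\ell$; it is $G$-invariant if every element of $G$ permutes the partitions $\Gamma_i$ among themselves. A finite permutation group is innately transitive if it has a transitive minimal normal subgroup, called a plinth. If $G$ is innately transitive on $\Omega$ with plinth $M$ and $\omega\in\Omega$, a Cartesian system of subgroups in $M$ with respect to $\omega$ is a set $\{K_1,\ldots,K_\ell\}$ of subgroups of $M$ which is invariant under conjugation by the point stabiliser $G_\omega$ and satisfies (i) $\bigcap_{i=1}^\ell K_i=M_\omega$ and (ii) $K_i\bigl(\bigcap_{j\ne i}K_j\bigr)=M$ for all $i\in\{1,\ldots,\ell\}$ (for $\ell=1$ the empty intersection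 is $M$). *)

theory Defs
  imports "HOL-Combinatorics.Permutations"
begin

text \<open>Permutation groups on a finite set Omega are modelled as sets of functions
  that permute Omega (identity outside Omega), closed under composition and inverse.\<close>

definition perm_group :: "'a set \<Rightarrow> ('a \<Rightarrow> 'a) set \<Rightarrow> bool" where
  "perm_group \<Omega> G \<longleftrightarrow> G \<subseteq> {g. g permutes \<Omega>} \<and> id \<in> G \<and>
     (\<forall>g\<in>G. \<forall>h\<in>G. g \<circ> h \<in> G) \<and> (\<forall>g\<in>G. inv g \<in> G)"

definition normal_perm_subgroup :: "'a set \<Rightarrow> ('a \<Rightarrow> 'a) set \<Rightarrow> ('a \<Rightarrow> 'a) set \<Rightarrow> bool" where
  "normal_perm_subgroup \<Omega> G N \<longleftrightarrow> perm_group \<Omega> N \<and> N \<subseteq> G \<and>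
     (\<forall>g\<in>G. \<forall>n\<in>N. g \<circ> n \<circ> inv g \<in> N)"

definition minimal_normal :: "'a set \<Rightarrow> ('a \<Rightarrow> 'a) set \<Rightarrow> ('a \<Rightarrow> 'a) set \<Rightarrow> bool" where
  "minimal_normal \<Omega> G M \<longleftrightarrow> normal_perm_subgroup \<Omega> G M \<and> M \<noteq> {id} \<and>
     (\<forall>N. normal_perm_subgroup \<Omega> G N \<longrightarrow> N \<subseteq> M \<longrightarrow> N = {id} \<or> N = M)"

definition transitive_on :: "'a set \<Rightarrow> ('a \<Rightarrow> 'a) set \<Rightarrow> bool" where
  "transitive_on \<Omega> H \<longleftrightarrow> (\<forall>x\<in>\<Omega>. \<forall>y\<in>\<Omega>. \<exists>h\<in>H. h x = y)"

definition plinth :: "'a set \<Rightarrow> ('a \<Rightarrow> 'a) set \<Rightarrow> ('a \<Rightarrow> 'a) set \<Rightarrow> bool" where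
  "plinth \<Omega> G M \<longleftrightarrow> minimal_normal \<Omega> G M \<and> transitive_on \<Omega> M"

definition innately_transitive :: "'a set \<Rightarrow> ('a \<Rightarrow> 'a) set \<Rightarrow> bool" where
  "innately_transitive \<Omega> G \<longleftrightarrow> perm_group \<Omega> G \<and> (\<exists>M. plinth \<Omega> G M)"

definition stab :: "('a \<Rightarrow> 'a) set \<Rightarrow> 'a \<Rightarrow> ('a \<Rightarrow> 'a) set" where
  "stab H \<omega> = {h \<in> H. h \<omega> = \<omega>}"

definition setstab :: "('a \<Rightarrow> 'a) set \<Rightarrow> 'a set \<Rightarrow> ('a \<Rightarrow> 'a) set" where
  "setstab H \<gamma> = {h \<in> H. h ` \<gamma> = \<gamma>}"

definition is_partition :: "'a set \<Rightarrow> 'a set set \<Rightarrow> bool" where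
  "is_partition \<Omega> P \<longleftrightarrow> \<Union>P = \<Omega> \<and> {} \<notin> P \<and>
     (\<forall>A\<in>P. \<forall>B\<in>P. A \<noteq> B \<longrightarrow> A \<inter> B = {})"

definition cartesian_decomposition :: "'a set \<Rightarrow> 'a set set set \<Rightarrow> bool" where
  "cartesian_decomposition \<Omega> E \<longleftrightarrow> finite E \<and> (\<forall>\<Gamma>\<in>E. is_partition \<Omega> \<Gamma>) \<and>
     (\<forall>c. (\<forall>\<Gamma>\<in>E. c \<Gamma> \<in> \<Gamma>) \<longrightarrow> card (\<Omega> \<inter> (\<Inter>\<Gamma>\<in>E. c \<Gamma>)) = 1)"

definition invariant_cd :: "'a set \<Rightarrow> ('a \<Rightarrow> 'a) set \<Rightarrow> 'a set set set \<Rightarrow> bool" where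
  "invariant_cd \<Omega> G E \<longleftrightarrow> cartesian_decomposition \<Omega> E \<and>
     (\<forall>g\<in>G. \<forall>\<Gamma>\<in>E. (\<lambda>\<gamma>. g ` \<gamma>) ` \<Gamma> \<in> E)"

definition invariant_cds :: "'a set \<Rightarrow> ('a \<Rightarrow> 'a) set \<Rightarrow> 'a set set set set" where
  "invariant_cds \<Omega> G = {E. invariant_cd \<Omega> G E}"

definition part_of :: "'a set set \<Rightarrow> 'a \<Rightarrow> 'a set" where
  "part_of \<Gamma> \<omega> = (THE \<gamma>. \<gamma> \<in> \<Gamma> \<and> \<omega> \<in> \<gamma>)"

text \<open>Cartesian systems of subgroups in M with respect to omega.
  The intersection over an empty family is M (relativised to M).\<close>
definition set_prod :: "('a \<Rightarrow> 'a) set \<Rightarrow> ('a \<Rightarrow> 'a) set \<Rightarrow> ('a \<Rightarrow> 'a) set" where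
  "set_prod A B = {a \<circ> b | a b. a \<in> A \<and> b \<in> B}"

definition cartesian_system ::
  "'a set \<Rightarrow> ('a \<Rightarrow> 'a) set \<Rightarrow> ('a \<Rightarrow> 'a) set \<Rightarrow> 'a \<Rightarrow> ('a \<Rightarrow> 'a) set set \<Rightarrow> bool" where
  "cartesian_system \<Omega> G M \<omega> \<K> \<longleftrightarrow>
     (\<forall>K\<in>\<K>. perm_group \<Omega> K \<and> K \<subseteq> M) \<and>
     (\<forall>g\<in>stab G \<omega>. \<forall>K\<in>\<K>. (\<lambda>k. g \<circ> k \<circ> inv g) ` K \<in> \<K>) \<and>
     M \<inter> \<Inter>\<K> = stab M \<omega> \<and>
     (\<forall>K\<in>\<K>. set_prod K (M \<inter> \<Inter>(\<K> - {K})) = M)"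

definition cartesian_systems ::
  "'a set \<Rightarrow> ('a \<Rightarrow> 'a) set \<Rightarrow> ('a \<Rightarrow> 'a) set \<Rightarrow> 'a \<Rightarrow> ('a \<Rightarrow> 'a) set set set" where
  "cartesian_systems \<Omega> G M \<omega> = {\<K>. cartesian_system \<Omega> G M \<omega> \<K>}"

definition cd_to_system :: "('a \<Rightarrow> 'a) set \<Rightarrow> 'a \<Rightarrow> 'a set set set \<Rightarrow> ('a \<Rightarrow> 'a) set set" where
  "cd_to_system M \<omega> E = (\<lambda>\<Gamma>. setstab M (part_of \<Gamma> \<omega>)) ` E"

end

theory Submission
  imports Defs "HOL-Computational_Algebra.Primes"
begin



lemma mult_fact_rec:
  fixes p :: nat assumes p: "prime p"
  shows "multiplicity p (fact u) = u div p + multiplicity p (fact (u div p))"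
proof (induction u)
  case 0 then show ?case by simp
next
  case (Suc u)
  have p0: "p \<noteq> 0" "p > 1" using p prime_gt_1_nat by auto
  have fs: "multiplicity p (fact (Suc u)) = multiplicity p (Suc u) + multiplicity p (fact u)"
  proof -
    have "(fact (Suc u)::nat) = Suc u * fact u" by simp
    moreover have "(fact u::nat) \<noteq> 0" by simp
    ultimately show ?thesis using prime_elem_multiplicity_mult_distrib[of p "Suc u" "fact u"] p
      by (simp del: mult_Suc fact_Suc)
  qed
  show ?case
  proof (cases "p dvd Suc u")
    case True
    then obtain q where q: "Suc u = p * q" by auto
    have q0: "q \<noteq> 0" using q by (metis mult_0_right nat.distinct(1))
    have d1: "Suc u div p = q" using q p0 by simp
    have d2: "u div p = q - 1"
    proof -
      have e: "u = (p - 1) + (q - 1) * p" using q q0 p0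
        by (cases q) (auto simp: algebra_simps)
      have "u div p = (q - 1) + (p - 1) div p" by (subst e, rule div_mult_self1) (use p0 in auto)
      then show ?thesis using p0 by simp
    qed
    have mq: "multiplicity p (Suc u) = Suc (multiplicity p q)"
    proof -
      have "multiplicity p (p*q) = Suc (multiplicity p q)"
        by (rule multiplicity_times_same) (use p0 q0 in auto)
      then show ?thesis using q by simp
    qed
    have fq: "multiplicity p (fact q) = multiplicity p q + multiplicity p (fact (q - 1))"
    proof -
      have "fact q = q * fact (q - 1)" using q0 by (cases q) auto
      moreover have "(fact (q-1)::nat) \<noteq> 0" by simp
      ultimately show ?thesis using q0 by (simp add: prime_elem_multiplicity_mult_distrib p)
    qed
    show ?thesis using fs Suc.IH d1 d2 mq fq q0 by simp
  next
    case False
    have "Suc u div p = u div p"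
    proof -
      have "Suc u mod p \<noteq> 0" using False by (simp add: dvd_eq_mod_eq_0)
      then show ?thesis using p0 by (metis div_Suc)
    qed
    moreover have "multiplicity p (Suc u) = 0" using False by (rule not_dvd_imp_multiplicity_0)
    ultimately show ?thesis using fs Suc.IH by simp
  qed
qed

lemma mult_fact_lt:
  fixes p :: nat assumes p: "prime p"
  shows "u > 0 \<Longrightarrow> multiplicity p (fact u) < u"
proof (induction u rule: less_induct)
  case (less u)
  have p0: "p > 1" using p prime_gt_1_nat by auto
  define q where "q = u div p"
  have qu: "q < u" using less.prems p0 by (simp add: q_def)
  have "2 * q \<le> p * q" using p0 by simp
  also have "p * q \<le> u" unfolding q_def by (metis div_times_less_eq_dividend mult.commute)
  finally have "2 * q \<le> u" .
  show ?case
  proof (cases "q = 0")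
    case True then show ?thesis using mult_fact_rec[OF p, of u] less.prems by (simp add: q_def)
  next
    case False
    then have "multiplicity p (fact q) < q" using less.IH qu by auto
    then show ?thesis using mult_fact_rec[OF p, of u] \<open>2 * q \<le> u\<close> by (simp add: q_def)
  qed
qed

lemma pow_not_dvd_fact:
  fixes n u :: nat assumes "n \<ge> 2" "u > 0"
  shows "\<not> n ^ u dvd fact u"
proof
  assume h: "n ^ u dvd fact u"
  obtain p where p: "prime p" "p dvd n" using assms(1) prime_factor_nat[of n] by auto
  have "p ^ u dvd n ^ u" using p by (simp add: dvd_power_same)
  then have "p ^ u dvd fact u" using h dvd_trans by blast
  then have "multiplicity p (fact u) \<ge> u"
    by (intro multiplicity_geI) (use p in \<open>auto simp: prime_gt_1_nat\<close>)
  with mult_fact_lt[OF p(1) assms(2)] show False by simp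
qed

definition act :: "('a \<Rightarrow> 'a) \<Rightarrow> 'a set set \<Rightarrow> 'a set set" where
  "act g \<Gamma> = (\<lambda>\<gamma>. g ` \<gamma>) ` \<Gamma>"

lemma act_comp: "act (a \<circ> b) \<Gamma> = act a (act b \<Gamma>)"
  unfolding act_def by (auto simp: image_comp)

lemma act_id[simp]: "act id \<Gamma> = \<Gamma>"
  unfolding act_def by simp

lemma act_card: "inj g \<Longrightarrow> card (act g \<Gamma>) = card \<Gamma>"
  unfolding act_def
  by (rule card_image) (simp add: inj_on_def inj_image_eq_iff)

lemma part_of_eq:
  assumes "is_partition \<Omega> \<Gamma>" "\<gamma> \<in> \<Gamma>" "x \<in> \<gamma>"
  shows "part_of \<Gamma> x = \<gamma>"
  unfolding part_of_def
proof (rule the_equality)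
  show "\<gamma> \<in> \<Gamma> \<and> x \<in> \<gamma>" using assms by simp
  fix \<delta> assume "\<delta> \<in> \<Gamma> \<and> x \<in> \<delta>"
  then show "\<delta> = \<gamma>" using assms unfolding is_partition_def by blast
qed

lemma part_of_in:
  assumes "is_partition \<Omega> \<Gamma>" "x \<in> \<Omega>"
  shows "part_of \<Gamma> x \<in> \<Gamma>" "x \<in> part_of \<Gamma> x"
proof -
  obtain \<gamma> where "\<gamma> \<in> \<Gamma>" "x \<in> \<gamma>" using assms unfolding is_partition_def by blast
  then show "part_of \<Gamma> x \<in> \<Gamma>" "x \<in> part_of \<Gamma> x" using part_of_eq[OF assms(1)] by auto
qed

lemma partition_sub: "is_partition \<Omega> \<Gamma> \<Longrightarrow> \<gamma> \<in> \<Gamma> \<Longrightarrow> \<gamma> \<subseteq> \<Omega>"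
  unfolding is_partition_def by blast

lemma cd_card:
  assumes cd: "cartesian_decomposition \<Omega> E"
  shows "card \<Omega> = (\<Prod>\<Delta>\<in>E. card \<Delta>)"
proof -
  have finE: "finite E" and part: "\<And>\<Delta>. \<Delta> \<in> E \<Longrightarrow> is_partition \<Omega> \<Delta>"
    and one: "\<And>c. (\<forall>\<Delta>\<in>E. c \<Delta> \<in> \<Delta>) \<Longrightarrow> card (\<Omega> \<inter> (\<Inter>\<Delta>\<in>E. c \<Delta>)) = 1"
    using cd unfolding cartesian_decomposition_def by blast+
  define f where "f x = restrict (\<lambda>\<Delta>. part_of \<Delta> x) E" for x
  have "bij_betw f \<Omega> (PiE E (\<lambda>\<Delta>. \<Delta>))"
    unfolding bij_betw_def
  proof (intro conjI)
    show "inj_on f \<Omega>"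
    proof (rule inj_onI)
      fix x y assume xy: "x \<in> \<Omega>" "y \<in> \<Omega>" "f x = f y"
      have c: "\<forall>\<Delta>\<in>E. part_of \<Delta> x \<in> \<Delta>" using part_of_in(1)[OF part xy(1)] by blast
      obtain z where z: "\<Omega> \<inter> (\<Inter>\<Delta>\<in>E. part_of \<Delta> x) = {z}" using one[OF c] by (elim card_1_singletonE)
      have x1: "x \<in> \<Omega> \<inter> (\<Inter>\<Delta>\<in>E. part_of \<Delta> x)" using part_of_in(2)[OF part xy(1)] xy(1) by blast
      have y1: "y \<in> \<Omega> \<inter> (\<Inter>\<Delta>\<in>E. part_of \<Delta> x)"
      proof -
        have "\<forall>\<Delta>\<in>E. part_of \<Delta> x = part_of \<Delta> y"
        proof
          fix \<Delta> assume "\<Delta> \<in> E"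
          from fun_cong[OF xy(3), of \<Delta>] show "part_of \<Delta> x = part_of \<Delta> y" using \<open>\<Delta> \<in> E\<close> by (simp add: f_def)
        qed
        then show ?thesis using part_of_in(2)[OF part xy(2)] xy(2) by auto
      qed
      show "x = y" using x1 y1 unfolding z by simp
    qed
    show "f ` \<Omega> = PiE E (\<lambda>\<Delta>. \<Delta>)"
    proof
      show "f ` \<Omega> \<subseteq> PiE E (\<lambda>\<Delta>. \<Delta>)" unfolding f_def using part_of_in(1)[OF part] by auto
      show "PiE E (\<lambda>\<Delta>. \<Delta>) \<subseteq> f ` \<Omega>"
      proof
        fix h assume h: "h \<in> PiE E (\<lambda>\<Delta>. \<Delta>)"
        then have "\<forall>\<Delta>\<in>E. h \<Delta> \<in> \<Delta>" by auto
        from one[OF this] obtain x where x: "\<Omega> \<inter> (\<Inter>\<Delta>\<in>E. h \<Delta>) = {x}"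
          by (elim card_1_singletonE)
        then have xO: "x \<in> \<Omega>" and xh: "\<And>\<Delta>. \<Delta> \<in> E \<Longrightarrow> x \<in> h \<Delta>" by auto
        have "f x = h"
        proof
          fix \<Delta> show "f x \<Delta> = h \<Delta>"
          proof (cases "\<Delta> \<in> E")
            case True then show ?thesis unfolding f_def using part_of_eq[OF part[OF True] _ xh[OF True]] h by auto
          next
            case False then show ?thesis unfolding f_def using h by auto
          qed
        qed
        then show "h \<in> f ` \<Omega>" using xO by blast
      qed
    qed
  qed
  then have "card \<Omega> = card (PiE E (\<lambda>\<Delta>. \<Delta>))" by (rule bij_betw_same_card)
  also have "\<dots> = (\<Prod>\<Delta>\<in>E. card \<Delta>)" using finE by (rule card_PiE)
  finally show ?thesis .
qed

lemma lagrange_fun: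
  assumes finS: "finite S" and HS: "H \<subseteq> S" and idH: "id \<in> H"
    and cH: "\<And>a b. a \<in> H \<Longrightarrow> b \<in> H \<Longrightarrow> a \<circ> b \<in> H"
    and iH: "\<And>a. a \<in> H \<Longrightarrow> \<exists>b\<in>H. a \<circ> b = id"
    and cS: "\<And>s h. s \<in> S \<Longrightarrow> h \<in> H \<Longrightarrow> s \<circ> h \<in> S"
    and injS: "\<And>s. s \<in> S \<Longrightarrow> inj s"
  shows "card H dvd card S"
proof -
  define C where "C = (\<lambda>s. (\<lambda>h. s \<circ> h) ` H) ` S"
  have U: "\<Union>C = S"
  proof
    show "\<Union>C \<subseteq> S" unfolding C_def using cS by auto
    show "S \<subseteq> \<Union>C"
    proof
      fix s assume "s \<in> S"
      then have "s \<in> (\<lambda>h. s \<circ> h) ` H" using idH by (metis comp_id image_eqI)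
      then show "s \<in> \<Union>C" unfolding C_def using \<open>s \<in> S\<close> by blast
    qed
  qed
  have card: "\<forall>c\<in>C. card c = card H"
  proof
    fix c assume "c \<in> C"
    then obtain s where s: "s \<in> S" "c = (\<lambda>h. s \<circ> h) ` H" unfolding C_def by auto
    have "inj_on (\<lambda>h. s \<circ> h) H"
    proof (rule inj_onI)
      fix a b assume "s \<circ> a = s \<circ> b"
      then show "a = b" using injS[OF s(1)] by (simp add: fun_eq_iff injD)
    qed
    then show "card c = card H" using s by (simp add: card_image)
  qed
  have coset: "(\<lambda>h. s1 \<circ> h) ` H \<subseteq> (\<lambda>h. s2 \<circ> h) ` H"
    if hh: "h1 \<in> H" "h2 \<in> H" "s1 \<circ> h1 = s2 \<circ> h2" for s1 s2 h1 h2
  proof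
    fix x assume "x \<in> (\<lambda>h. s1 \<circ> h) ` H"
    then obtain h where h: "h \<in> H" "x = s1 \<circ> h" by auto
    obtain h1' where h1': "h1' \<in> H" "h1 \<circ> h1' = id" using iH[OF hh(1)] by auto
    have "s1 = s2 \<circ> h2 \<circ> h1'" using hh(3) h1'(2) by (metis comp_assoc comp_id)
    then have "x = s2 \<circ> (h2 \<circ> h1' \<circ> h)" using h by (simp add: comp_assoc)
    moreover have "h2 \<circ> h1' \<circ> h \<in> H" using cH hh(2) h1'(1) h(1) by blast
    ultimately show "x \<in> (\<lambda>h. s2 \<circ> h) ` H" by blast
  qed
  have disj: "\<forall>c1\<in>C. \<forall>c2\<in>C. c1 \<noteq> c2 \<longrightarrow> c1 \<inter> c2 = {}"
  proof (intro ballI impI)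
    fix c1 c2 assume c: "c1 \<in> C" "c2 \<in> C" "c1 \<noteq> c2"
    then obtain s1 s2 where s: "c1 = (\<lambda>h. s1 \<circ> h) ` H" "c2 = (\<lambda>h. s2 \<circ> h) ` H"
      unfolding C_def by auto
    show "c1 \<inter> c2 = {}"
    proof (rule ccontr)
      assume "c1 \<inter> c2 \<noteq> {}"
      then obtain h1 h2 where hh: "h1 \<in> H" "h2 \<in> H" "s1 \<circ> h1 = s2 \<circ> h2" using s by auto
      have "c1 \<subseteq> c2" using coset[OF hh] s by simp
      moreover have "c2 \<subseteq> c1" using coset[OF hh(2,1) hh(3)[symmetric]] s by simp
      ultimately show False using c(3) by simp
    qed
  qed
  have "finite C" unfolding C_def using finS by simp
  then have "card H * card C = card (\<Union>C)"
    using card disj U finS by (intro card_partition) auto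
  then show ?thesis using U by (metis dvd_triv_left)
qed

lemma pg_perm: "perm_group \<Omega> H \<Longrightarrow> h \<in> H \<Longrightarrow> h permutes \<Omega>"
  unfolding perm_group_def by auto
lemma pg_id: "perm_group \<Omega> H \<Longrightarrow> id \<in> H"
  unfolding perm_group_def by auto
lemma pg_comp: "perm_group \<Omega> H \<Longrightarrow> a \<in> H \<Longrightarrow> b \<in> H \<Longrightarrow> a \<circ> b \<in> H"
  unfolding perm_group_def by auto
lemma pg_inv: "perm_group \<Omega> H \<Longrightarrow> a \<in> H \<Longrightarrow> inv a \<in> H"
  unfolding perm_group_def by auto

locale itsetup =
  fixes \<Omega> :: "'a set" and G M :: "('a \<Rightarrow> 'a) set" and \<omega> :: 'a
  assumes fin: "finite \<Omega>" and pgG: "perm_group \<Omega> G" and pl: "plinth \<Omega> G M" and om: "\<omega> \<in> \<Omega>"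
begin

lemma pgM: "perm_group \<Omega> M"
  using pl unfolding plinth_def minimal_normal_def normal_perm_subgroup_def by auto
lemma MG: "M \<subseteq> G"
  using pl unfolding plinth_def minimal_normal_def normal_perm_subgroup_def by auto
lemma Mnormal: "g \<in> G \<Longrightarrow> m \<in> M \<Longrightarrow> g \<circ> m \<circ> inv g \<in> M"
  using pl unfolding plinth_def minimal_normal_def normal_perm_subgroup_def by auto
lemma Mtrans: "x \<in> \<Omega> \<Longrightarrow> y \<in> \<Omega> \<Longrightarrow> \<exists>m\<in>M. m x = y"
  using pl unfolding plinth_def transitive_on_def by auto
lemma Mmin: "normal_perm_subgroup \<Omega> G N \<Longrightarrow> N \<subseteq> M \<Longrightarrow> N = {id} \<or> N = M"
  using pl unfolding plinth_def minimal_normal_def by auto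

lemma G_perm: "g \<in> G \<Longrightarrow> g permutes \<Omega>" using pgG pg_perm by blast
lemma M_perm: "g \<in> M \<Longrightarrow> g permutes \<Omega>" using pgM pg_perm by blast

lemma G_inv1[simp]: "g \<in> G \<Longrightarrow> inv g \<circ> g = id" using G_perm permutes_inv_o by blast
lemma G_inv2[simp]: "g \<in> G \<Longrightarrow> g \<circ> inv g = id" using G_perm permutes_inv_o by blast
lemma G_inv3[simp]: "g \<in> G \<Longrightarrow> inv g (g x) = x" using G_perm permutes_inverses by fast
lemma G_inv4[simp]: "g \<in> G \<Longrightarrow> g (inv g x) = x" using G_perm permutes_inverses by fast
lemma G_invinv[simp]: "g \<in> G \<Longrightarrow> inv (inv g) = g" using G_perm permutes_inv_inv by blast
lemma G_inv_in: "g \<in> G \<Longrightarrow> inv g \<in> G" using pgG pg_inv by blast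
lemma G_comp: "g \<in> G \<Longrightarrow> h \<in> G \<Longrightarrow> g \<circ> h \<in> G" using pgG pg_comp by blast
lemma M_inv_in: "g \<in> M \<Longrightarrow> inv g \<in> M" using pgM pg_inv by blast
lemma M_comp: "g \<in> M \<Longrightarrow> h \<in> M \<Longrightarrow> g \<circ> h \<in> M" using pgM pg_comp by blast
lemma M_id: "id \<in> M" using pgM pg_id by blast
lemma MG': "m \<in> M \<Longrightarrow> m \<in> G" using MG by blast
lemma G_Omega: "g \<in> G \<Longrightarrow> x \<in> \<Omega> \<Longrightarrow> g x \<in> \<Omega>" by (metis G_perm permutes_in_image)
lemma G_img: "g \<in> G \<Longrightarrow> g ` \<Omega> = \<Omega>" using G_perm permutes_image by fast
lemma G_inj: "g \<in> G \<Longrightarrow> inj g" using G_perm permutes_inj by fast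
lemma Mnormal': "g \<in> G \<Longrightarrow> m \<in> M \<Longrightarrow> inv g \<circ> m \<circ> g \<in> M"
  using Mnormal[OF G_inv_in] by fastforce

lemma finM: "finite M"
proof -
  have "M \<subseteq> {p. p permutes \<Omega>}" using M_perm by blast
  then show ?thesis using finite_permutations[OF fin] finite_subset by blast
qed

lemma orbit_stab: "card \<Omega> dvd card M"
proof -
  define C where "C = (\<lambda>x. {m\<in>M. m \<omega> = x}) ` \<Omega>"
  have U: "\<Union>C = M" unfolding C_def using G_Omega[OF MG'] om by auto
  have card: "\<forall>c\<in>C. card c = card (stab M \<omega>)"
  proof
    fix c assume "c \<in> C"
    then obtain x where x: "x \<in> \<Omega>" "c = {m\<in>M. m \<omega> = x}" unfolding C_def by auto
    obtain a where a: "a \<in> M" "a \<omega> = x" using Mtrans[OF om x(1)] by auto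
    have "c = (\<lambda>h. a \<circ> h) ` stab M \<omega>"
    proof
      show "(\<lambda>h. a \<circ> h) ` stab M \<omega> \<subseteq> c" using a x M_comp unfolding stab_def by auto
      show "c \<subseteq> (\<lambda>h. a \<circ> h) ` stab M \<omega>"
      proof
        fix m assume "m \<in> c"
        then have m: "m \<in> M" "m \<omega> = x" using x by auto
        have "inv a \<circ> m \<in> stab M \<omega>" unfolding stab_def
          using m a M_comp M_inv_in MG' by (auto, metis G_inv3 MG')
        moreover have "m = a \<circ> (inv a \<circ> m)" using a(1) MG' by (simp add: comp_assoc[symmetric])
        ultimately show "m \<in> (\<lambda>h. a \<circ> h) ` stab M \<omega>" by blast
      qed
    qed
    moreover have "inj_on (\<lambda>h. a \<circ> h) (stab M \<omega>)"
      by (rule inj_onI) (use G_inj[OF MG'[OF a(1)]] in \<open>simp add: fun_eq_iff injD\<close>)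
    ultimately show "card c = card (stab M \<omega>)" by (simp add: card_image)
  qed
  have disj: "\<forall>c1\<in>C. \<forall>c2\<in>C. c1 \<noteq> c2 \<longrightarrow> c1 \<inter> c2 = {}" unfolding C_def by auto
  have "card C = card \<Omega>"
    unfolding C_def
  proof (rule card_image, rule inj_onI)
    fix x y assume "x \<in> \<Omega>" "y \<in> \<Omega>" "{m \<in> M. m \<omega> = x} = {m \<in> M. m \<omega> = y}"
    moreover obtain a where "a \<in> M" "a \<omega> = x" using Mtrans[OF om \<open>x \<in> \<Omega>\<close>] by auto
    ultimately show "x = y" by blast
  qed
  moreover have "card (stab M \<omega>) * card C = card (\<Union>C)"
    using card disj U finM by (intro card_partition) (auto simp: C_def fin)
  ultimately show ?thesis using U by (metis dvd_triv_right)
qed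

end



context itsetup begin

lemma act_perm_inv: "g \<in> G \<Longrightarrow> act (inv g) (act g \<Gamma>) = \<Gamma>"
  by (simp add: act_comp[symmetric])
lemma act_perm_inv2: "g \<in> G \<Longrightarrow> act g (act (inv g) \<Gamma>) = \<Gamma>"
  by (simp add: act_comp[symmetric])

lemma inv_cd_props:
  assumes "invariant_cd \<Omega> G E"
  shows "finite E" "\<And>\<Delta>. \<Delta> \<in> E \<Longrightarrow> is_partition \<Omega> \<Delta>"
    "\<And>g \<Delta>. g \<in> G \<Longrightarrow> \<Delta> \<in> E \<Longrightarrow> act g \<Delta> \<in> E"
    "cartesian_decomposition \<Omega> E"
  using assms unfolding invariant_cd_def cartesian_decomposition_def act_def by blast+

lemma M_fixes:
  assumes inv: "invariant_cd \<Omega> G E" and m0: "m0 \<in> M" and G0: "\<Gamma>0 \<in> E"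
  shows "act m0 \<Gamma>0 = \<Gamma>0"
proof (rule ccontr)
  assume nf: "act m0 \<Gamma>0 \<noteq> \<Gamma>0"
  note E = inv_cd_props[OF inv]
  have part0: "is_partition \<Omega> \<Gamma>0" using E(2) G0 .
  define n where "n = card \<Gamma>0"
  have finG0: "finite \<Gamma>0"
  proof -
    have "\<Gamma>0 \<subseteq> Pow \<Omega>" using partition_sub[OF part0] by blast
    then show ?thesis using fin finite_subset by blast
  qed
  have n2: "n \<ge> 2"
  proof (rule ccontr)
    assume "\<not> n \<ge> 2"
    then have "n = 0 \<or> n = 1" by auto
    then show False
    proof
      assume "n = 0"
      then have "\<Gamma>0 = {}" using finG0 n_def by simp
      then show False using part0 om unfolding is_partition_def by auto
    next
      assume "n = 1"
      then have "card \<Gamma>0 = 1" using n_def by simp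
      then obtain A where A: "\<Gamma>0 = {A}" by (rule card_1_singletonE)
      then have "A = \<Omega>" using part0 unfolding is_partition_def by auto
      then have "act m0 \<Gamma>0 = \<Gamma>0" using A G_img[OF MG'[OF m0]] by (simp add: act_def)
      then show False using nf by simp
    qed
  qed
  define U where "U = {\<Delta>\<in>E. card \<Delta> = n}"
  have G0U: "\<Gamma>0 \<in> U" using G0 n_def U_def by simp
  have finU: "finite U" using E(1) U_def by simp
  have actU: "act g \<Delta> \<in> U" if "g \<in> G" "\<Delta> \<in> U" for g \<Delta>
    using that E(3) act_card[OF G_inj[OF that(1)]] unfolding U_def by auto
  define N where "N = {a\<in>M. \<forall>\<Delta>\<in>U. act a \<Delta> = \<Delta>}"
  have nps: "normal_perm_subgroup \<Omega> G N"
    unfolding normal_perm_subgroup_def perm_group_def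
  proof (intro conjI ballI)
    show "N \<subseteq> {g. g permutes \<Omega>}" using M_perm N_def by auto
    show "id \<in> N" using M_id N_def by simp
    show "N \<subseteq> G" using MG N_def by auto
    fix a assume a: "a \<in> N"
    show "inv a \<in> N" unfolding N_def
    proof (intro CollectI conjI ballI)
      show "inv a \<in> M" using a M_inv_in N_def by auto
      fix \<Delta> assume "\<Delta> \<in> U"
      then have "act a \<Delta> = \<Delta>" using a N_def by auto
      then show "act (inv a) \<Delta> = \<Delta>" using act_perm_inv[of a \<Delta>] a MG' N_def by auto
    qed
  next
    fix a b assume a: "a \<in> N" and b: "b \<in> N"
    show "a \<circ> b \<in> N" using a b M_comp unfolding N_def by (auto simp: act_comp)
  next
    fix g a assume g: "g \<in> G" and a: "a \<in> N"
    show "g \<circ> a \<circ> inv g \<in> N" unfolding N_def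
    proof (intro CollectI conjI ballI)
      show "g \<circ> a \<circ> inv g \<in> M" using Mnormal g a N_def by auto
      fix \<Delta> assume D: "\<Delta> \<in> U"
      have "act (inv g) \<Delta> \<in> U" using actU[OF G_inv_in[OF g] D] .
      then have "act a (act (inv g) \<Delta>) = act (inv g) \<Delta>" using a N_def by auto
      then show "act (g \<circ> a \<circ> inv g) \<Delta> = \<Delta>" using act_perm_inv2[OF g] by (simp add: act_comp)
    qed
  qed
  have "N \<subseteq> M" using N_def by auto
  with Mmin[OF nps] have "N = {id} \<or> N = M" .
  moreover have "m0 \<notin> N" using nf G0U N_def by auto
  ultimately have Nid: "N = {id}" using m0 by auto
  define \<phi> where "\<phi> a = (\<lambda>\<Delta>. if \<Delta> \<in> U then act a \<Delta> else \<Delta>)" for a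
  have \<phi>comp: "\<phi> a \<circ> \<phi> b = \<phi> (a \<circ> b)" if "a \<in> M" "b \<in> M" for a b
    using actU[OF MG'[OF that(2)]] unfolding \<phi>_def by (auto simp: act_comp fun_eq_iff)
  have \<phi>id: "\<phi> id = id" unfolding \<phi>_def by (auto simp: fun_eq_iff)
  have \<phi>perm: "\<phi> a permutes U" if a: "a \<in> M" for a
  proof (rule bij_imp_permutes)
    show "bij_betw (\<phi> a) U U"
    proof (rule bij_betw_byWitness[where f'="\<phi> (inv a)"])
      show "\<forall>x\<in>U. \<phi> (inv a) (\<phi> a x) = x" using actU[OF MG'[OF a]] act_perm_inv[OF MG'[OF a]]
        unfolding \<phi>_def by auto
      show "\<forall>x\<in>U. \<phi> a (\<phi> (inv a) x) = x" using actU[OF G_inv_in[OF MG'[OF a]]] act_perm_inv2[OF MG'[OF a]]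
        unfolding \<phi>_def by auto
      show "\<phi> a ` U \<subseteq> U" using actU[OF MG'[OF a]] unfolding \<phi>_def by auto
      show "\<phi> (inv a) ` U \<subseteq> U" using actU[OF G_inv_in[OF MG'[OF a]]] unfolding \<phi>_def by auto
    qed
    show "\<And>x. x \<notin> U \<Longrightarrow> \<phi> a x = x" unfolding \<phi>_def by auto
  qed
  have \<phi>inj: "inj_on \<phi> M"
  proof (rule inj_onI)
    fix a b assume a: "a \<in> M" and b: "b \<in> M" and e: "\<phi> a = \<phi> b"
    have "inv b \<circ> a \<in> N" unfolding N_def
    proof (intro CollectI conjI ballI)
      show "inv b \<circ> a \<in> M" using a b M_comp M_inv_in by auto
      fix \<Delta> assume D: "\<Delta> \<in> U"
      have "act a \<Delta> = act b \<Delta>" using fun_cong[OF e, of \<Delta>] D unfolding \<phi>_def by simp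
      then show "act (inv b \<circ> a) \<Delta> = \<Delta>" using act_perm_inv[OF MG'[OF b]] by (simp add: act_comp)
    qed
    then have "inv b \<circ> a = id" using Nid by auto
    then have "b \<circ> (inv b \<circ> a) = b" by simp
    then show "a = b" using MG'[OF b] by (simp add: comp_assoc[symmetric])
  qed
  have "card (\<phi> ` M) dvd card {p. p permutes U}"
  proof (rule lagrange_fun)
    show "finite {p. p permutes U}" using finite_permutations[OF finU] .
    show "\<phi> ` M \<subseteq> {p. p permutes U}" using \<phi>perm by auto
    show "id \<in> \<phi> ` M" using \<phi>id M_id by (metis image_eqI)
    show "\<And>a b. a \<in> \<phi> ` M \<Longrightarrow> b \<in> \<phi> ` M \<Longrightarrow> a \<circ> b \<in> \<phi> ` M"
      using \<phi>comp M_comp by auto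
    show "\<And>a. a \<in> \<phi> ` M \<Longrightarrow> \<exists>b\<in>\<phi> ` M. a \<circ> b = id"
    proof -
      fix x assume "x \<in> \<phi> ` M"
      then obtain a where a: "a \<in> M" "x = \<phi> a" by auto
      have "\<phi> a \<circ> \<phi> (inv a) = id" using \<phi>comp[OF a(1) M_inv_in[OF a(1)]] MG'[OF a(1)] \<phi>id by simp
      then show "\<exists>b\<in>\<phi> ` M. x \<circ> b = id" using a M_inv_in by blast
    qed
    show "\<And>s h. s \<in> {p. p permutes U} \<Longrightarrow> h \<in> \<phi> ` M \<Longrightarrow> s \<circ> h \<in> {p. p permutes U}"
      using \<phi>perm permutes_compose by blast
    show "\<And>s. s \<in> {p. p permutes U} \<Longrightarrow> inj s" using permutes_inj by blast
  qed
  then have d1: "card M dvd fact (card U)"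
    using card_image[OF \<phi>inj] card_permutations[OF refl finU] by simp
  have "card \<Omega> = (\<Prod>\<Delta>\<in>E. card \<Delta>)" using cd_card[OF E(4)] .
  also have "\<dots> = (\<Prod>\<Delta>\<in>U. card \<Delta>) * (\<Prod>\<Delta>\<in>E - U. card \<Delta>)"
    using prod.subset_diff[of U E card] E(1) U_def by (auto simp: mult.commute)
  also have "(\<Prod>\<Delta>\<in>U. card \<Delta>) = n ^ card U" using U_def by simp
  finally have "n ^ card U dvd card \<Omega>" by simp
  then have "n ^ card U dvd fact (card U)" using orbit_stab d1 dvd_trans by blast
  moreover have "card U > 0" using finU G0U card_gt_0_iff by blast
  ultimately show False using pow_not_dvd_fact[OF n2] by blast
qed

end



context itsetup begin

lemma setstab_pg: "perm_group \<Omega> (setstab M \<gamma>)"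
  unfolding perm_group_def setstab_def
proof (intro conjI ballI)
  show "{h \<in> M. h ` \<gamma> = \<gamma>} \<subseteq> {g. g permutes \<Omega>}" using M_perm by auto
  show "id \<in> {h \<in> M. h ` \<gamma> = \<gamma>}" using M_id by simp
  fix a assume a: "a \<in> {h \<in> M. h ` \<gamma> = \<gamma>}"
  have "inv a ` \<gamma> = inv a ` (a ` \<gamma>)" using a by simp
  also have "\<dots> = (inv a \<circ> a) ` \<gamma>" by (simp only: image_comp)
  also have "\<dots> = \<gamma>" using a MG' by simp
  finally have "inv a ` \<gamma> = \<gamma>" .
  then show "inv a \<in> {h \<in> M. h ` \<gamma> = \<gamma>}" using a M_inv_in by auto
next
  fix a b assume "a \<in> {h \<in> M. h ` \<gamma> = \<gamma>}" "b \<in> {h \<in> M. h ` \<gamma> = \<gamma>}"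
  then have ab: "a \<in> M" "b \<in> M" "a ` \<gamma> = \<gamma>" "b ` \<gamma> = \<gamma>" by auto
  have "(a \<circ> b) ` \<gamma> = a ` (b ` \<gamma>)" by (simp only: image_comp)
  then have "(a \<circ> b) ` \<gamma> = \<gamma>" using ab by simp
  then show "a \<circ> b \<in> {h \<in> M. h ` \<gamma> = \<gamma>}" using M_comp ab by auto
qed

lemma cd_one:
  assumes "cartesian_decomposition \<Omega> E" "\<forall>\<Gamma>\<in>E. c \<Gamma> \<in> \<Gamma>"
  shows "card (\<Omega> \<inter> (\<Inter>\<Gamma>\<in>E. c \<Gamma>)) = 1"
proof -
  have "\<forall>c. (\<forall>\<Gamma>\<in>E. c \<Gamma> \<in> \<Gamma>) \<longrightarrow> card (\<Omega> \<inter> (\<Inter>\<Gamma>\<in>E. c \<Gamma>)) = 1"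
    using assms(1) unfolding cartesian_decomposition_def by (elim conjE)
  then show ?thesis using assms(2) by simp
qed

lemma M_part:
  assumes inv: "invariant_cd \<Omega> G E" and m: "m \<in> M" and D: "\<Delta> \<in> E" and x: "x \<in> \<Omega>"
  shows "m ` part_of \<Delta> x = part_of \<Delta> (m x)"
proof -
  note E = inv_cd_props[OF inv]
  have p: "is_partition \<Omega> \<Delta>" using E(2) D .
  have "m ` part_of \<Delta> x \<in> act m \<Delta>" using part_of_in(1)[OF p x] unfolding act_def by blast
  then have i1: "m ` part_of \<Delta> x \<in> \<Delta>" using M_fixes[OF inv m D] by simp
  have i2: "m x \<in> m ` part_of \<Delta> x" using part_of_in(2)[OF p x] by blast
  show ?thesis using part_of_eq[OF p i1 i2] by simp
qed

lemma sys_conj: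
  assumes inv: "invariant_cd \<Omega> G E" and g: "g \<in> stab G \<omega>" and D: "\<Gamma> \<in> E"
  shows "(\<lambda>k. g \<circ> k \<circ> inv g) ` setstab M (part_of \<Gamma> \<omega>) = setstab M (part_of (act g \<Gamma>) \<omega>)"
proof -
  note E = inv_cd_props[OF inv]
  have gG: "g \<in> G" and gw: "g \<omega> = \<omega>" using g unfolding stab_def by auto
  define \<gamma> where "\<gamma> = part_of \<Gamma> \<omega>"
  have p: "is_partition \<Omega> \<Gamma>" using E(2) D .
  have p': "is_partition \<Omega> (act g \<Gamma>)" using E(2) E(3)[OF gG D] .
  have eq: "part_of (act g \<Gamma>) \<omega> = g ` \<gamma>"
  proof (rule part_of_eq[OF p'])
    show "g ` \<gamma> \<in> act g \<Gamma>" using part_of_in(1)[OF p om] unfolding act_def \<gamma>_def by blast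
    show "\<omega> \<in> g ` \<gamma>" using part_of_in(2)[OF p om] gw unfolding \<gamma>_def by (metis imageI)
  qed
  show ?thesis unfolding eq \<gamma>_def[symmetric]
  proof
    show "(\<lambda>k. g \<circ> k \<circ> inv g) ` setstab M \<gamma> \<subseteq> setstab M (g ` \<gamma>)"
    proof
      fix x assume "x \<in> (\<lambda>k. g \<circ> k \<circ> inv g) ` setstab M \<gamma>"
      then obtain k where k: "k \<in> M" "k ` \<gamma> = \<gamma>" "x = g \<circ> k \<circ> inv g" unfolding setstab_def by auto
      have "x ` (g ` \<gamma>) = (g \<circ> k \<circ> (inv g \<circ> g)) ` \<gamma>" using k(3) by (simp add: image_comp comp_assoc)
      also have "\<dots> = g ` (k ` \<gamma>)" using gG by (simp add: image_comp)
      finally have "x ` (g ` \<gamma>) = g ` \<gamma>" using k(2) by simp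
      moreover have "x \<in> M" using Mnormal[OF gG k(1)] k(3) by simp
      ultimately show "x \<in> setstab M (g ` \<gamma>)" unfolding setstab_def by simp
    qed
    show "setstab M (g ` \<gamma>) \<subseteq> (\<lambda>k. g \<circ> k \<circ> inv g) ` setstab M \<gamma>"
    proof
      fix x assume "x \<in> setstab M (g ` \<gamma>)"
      then have x: "x \<in> M" "x ` (g ` \<gamma>) = g ` \<gamma>" unfolding setstab_def by auto
      define k where "k = inv g \<circ> x \<circ> g"
      have kM: "k \<in> M" using Mnormal'[OF gG x(1)] k_def by simp
      have "k ` \<gamma> = inv g ` (x ` (g ` \<gamma>))" unfolding k_def by (simp add: image_comp)
      also have "\<dots> = (inv g \<circ> g) ` \<gamma>" using x(2) by (simp add: image_comp)
      finally have k\<gamma>: "k ` \<gamma> = \<gamma>" using gG by simp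
      have "g \<circ> k \<circ> inv g = (g \<circ> inv g) \<circ> x \<circ> (g \<circ> inv g)" unfolding k_def by (simp add: comp_assoc)
      then have "g \<circ> k \<circ> inv g = x" using gG by simp
      then show "x \<in> (\<lambda>k. g \<circ> k \<circ> inv g) ` setstab M \<gamma>" using kM k\<gamma> unfolding setstab_def by force
    qed
  qed
qed

lemma sys_inter:
  assumes inv: "invariant_cd \<Omega> G E"
  shows "M \<inter> \<Inter>((\<lambda>\<Gamma>. setstab M (part_of \<Gamma> \<omega>)) ` E) = stab M \<omega>"
proof
  note E = inv_cd_props[OF inv]
  show "M \<inter> \<Inter>((\<lambda>\<Gamma>. setstab M (part_of \<Gamma> \<omega>)) ` E) \<subseteq> stab M \<omega>"
  proof
    fix m assume "m \<in> M \<inter> \<Inter>((\<lambda>\<Gamma>. setstab M (part_of \<Gamma> \<omega>)) ` E)"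
    then have m: "m \<in> M" "\<And>\<Gamma>. \<Gamma> \<in> E \<Longrightarrow> m ` part_of \<Gamma> \<omega> = part_of \<Gamma> \<omega>"
      unfolding setstab_def by auto
    have c: "\<forall>\<Gamma>\<in>E. part_of \<Gamma> \<omega> \<in> \<Gamma>" using part_of_in(1)[OF E(2) om] by blast
    have "card (\<Omega> \<inter> (\<Inter>\<Gamma>\<in>E. part_of \<Gamma> \<omega>)) = 1"
      using cd_one[OF E(4) c] .
    then obtain z where z: "\<Omega> \<inter> (\<Inter>\<Gamma>\<in>E. part_of \<Gamma> \<omega>) = {z}" by (rule card_1_singletonE)
    have w: "\<omega> \<in> \<Omega> \<inter> (\<Inter>\<Gamma>\<in>E. part_of \<Gamma> \<omega>)" using part_of_in(2)[OF E(2) om] om by blast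
    have mw: "m \<omega> \<in> \<Omega> \<inter> (\<Inter>\<Gamma>\<in>E. part_of \<Gamma> \<omega>)"
    proof -
      have "\<forall>\<Gamma>\<in>E. m \<omega> \<in> part_of \<Gamma> \<omega>"
      proof
        fix \<Gamma> assume "\<Gamma> \<in> E"
        then have "m \<omega> \<in> m ` part_of \<Gamma> \<omega>" using part_of_in(2)[OF E(2) om] by blast
        then show "m \<omega> \<in> part_of \<Gamma> \<omega>" using m(2)[OF \<open>\<Gamma> \<in> E\<close>] by simp
      qed
      then show ?thesis using G_Omega[OF MG'[OF m(1)] om] by blast
    qed
    have "m \<omega> = \<omega>" using w mw unfolding z by simp
    then show "m \<in> stab M \<omega>" using m(1) unfolding stab_def by simp
  qed
  show "stab M \<omega> \<subseteq> M \<inter> \<Inter>((\<lambda>\<Gamma>. setstab M (part_of \<Gamma> \<omega>)) ` E)"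
  proof
    fix m assume "m \<in> stab M \<omega>"
    then have m: "m \<in> M" "m \<omega> = \<omega>" unfolding stab_def by auto
    have "\<And>\<Gamma>. \<Gamma> \<in> E \<Longrightarrow> m ` part_of \<Gamma> \<omega> = part_of \<Gamma> \<omega>" using M_part[OF inv m(1) _ om] m(2) by simp
    then show "m \<in> M \<inter> \<Inter>((\<lambda>\<Gamma>. setstab M (part_of \<Gamma> \<omega>)) ` E)" using m(1) unfolding setstab_def by auto
  qed
qed

lemma sys_prod:
  assumes inv: "invariant_cd \<Omega> G E" and G: "\<Gamma> \<in> E"
  shows "set_prod (setstab M (part_of \<Gamma> \<omega>))
           (M \<inter> \<Inter>((\<lambda>\<Gamma>. setstab M (part_of \<Gamma> \<omega>)) ` E - {setstab M (part_of \<Gamma> \<omega>)})) = M"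
proof
  note E = inv_cd_props[OF inv]
  show "set_prod (setstab M (part_of \<Gamma> \<omega>))
           (M \<inter> \<Inter>((\<lambda>\<Gamma>. setstab M (part_of \<Gamma> \<omega>)) ` E - {setstab M (part_of \<Gamma> \<omega>)})) \<subseteq> M"
  proof
    fix z assume "z \<in> set_prod (setstab M (part_of \<Gamma> \<omega>))
           (M \<inter> \<Inter>((\<lambda>\<Gamma>. setstab M (part_of \<Gamma> \<omega>)) ` E - {setstab M (part_of \<Gamma> \<omega>)}))"
    then obtain a b where "z = a \<circ> b" "a \<in> setstab M (part_of \<Gamma> \<omega>)" "b \<in> M"
      unfolding set_prod_def by blast
    then show "z \<in> M" using M_comp unfolding setstab_def by blast
  qed
  show "M \<subseteq> set_prod (setstab M (part_of \<Gamma> \<omega>))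
           (M \<inter> \<Inter>((\<lambda>\<Gamma>. setstab M (part_of \<Gamma> \<omega>)) ` E - {setstab M (part_of \<Gamma> \<omega>)}))"
  proof
    fix m assume m: "m \<in> M"
    define x where "x = m \<omega>"
    have xO: "x \<in> \<Omega>" using G_Omega[OF MG'[OF m] om] x_def by simp
    define c where "c \<Delta> = (if \<Delta> = \<Gamma> then part_of \<Gamma> \<omega> else part_of \<Delta> x)" for \<Delta>
    have c: "\<forall>\<Delta>\<in>E. c \<Delta> \<in> \<Delta>" unfolding c_def using part_of_in(1)[OF E(2) om] part_of_in(1)[OF E(2) xO] by auto
    have "card (\<Omega> \<inter> (\<Inter>\<Delta>\<in>E. c \<Delta>)) = 1"
      using cd_one[OF E(4) c] .
    then obtain y where y: "\<Omega> \<inter> (\<Inter>\<Delta>\<in>E. c \<Delta>) = {y}" by (rule card_1_singletonE)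
    then have yO: "y \<in> \<Omega>" and yc: "\<And>\<Delta>. \<Delta> \<in> E \<Longrightarrow> y \<in> c \<Delta>" by auto
    obtain a where a: "a \<in> M" "a \<omega> = y" using Mtrans[OF om yO] by auto
    have aG: "a \<in> G" using MG' a(1) .
    have aK: "a \<in> setstab M (part_of \<Gamma> \<omega>)"
    proof -
      have "a ` part_of \<Gamma> \<omega> = part_of \<Gamma> y" using M_part[OF inv a(1) G om] a(2) by simp
      also have "\<dots> = part_of \<Gamma> \<omega>" using yc[OF G] part_of_eq[OF E(2)[OF G] part_of_in(1)[OF E(2)[OF G] om]]
        unfolding c_def by simp
      finally show ?thesis using a(1) unfolding setstab_def by simp
    qed
    define b where "b = inv a \<circ> m"
    have bM: "b \<in> M" using M_comp M_inv_in a(1) m b_def by simp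
    have mab: "m = a \<circ> b" unfolding b_def using aG by (simp add: comp_assoc[symmetric])
    have bK: "b \<in> setstab M (part_of \<Delta> \<omega>)" if D: "\<Delta> \<in> E" "\<Delta> \<noteq> \<Gamma>" for \<Delta>
    proof -
      have "y \<in> part_of \<Delta> x" using yc[OF D(1)] D(2) unfolding c_def by simp
      then have "part_of \<Delta> y = part_of \<Delta> x" using part_of_eq[OF E(2)[OF D(1)] part_of_in(1)[OF E(2)[OF D(1)] xO]] by simp
      then have "a ` part_of \<Delta> \<omega> = part_of \<Delta> x" using M_part[OF inv a(1) D(1) om] a(2) by simp
      then have "inv a ` (a ` part_of \<Delta> \<omega>) = inv a ` part_of \<Delta> x" by simp
      then have "part_of \<Delta> \<omega> = part_of \<Delta> (inv a x)"
        using M_part[OF inv M_inv_in[OF a(1)] D(1) xO] aG by (simp add: image_comp)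
      moreover have "b ` part_of \<Delta> \<omega> = part_of \<Delta> (inv a x)"
        using M_part[OF inv bM D(1) om] unfolding b_def x_def by simp
      ultimately show ?thesis using bM unfolding setstab_def by simp
    qed
    have "b \<in> M \<inter> \<Inter>((\<lambda>\<Gamma>. setstab M (part_of \<Gamma> \<omega>)) ` E - {setstab M (part_of \<Gamma> \<omega>)})"
      using bM bK by auto
    then show "m \<in> set_prod (setstab M (part_of \<Gamma> \<omega>))
           (M \<inter> \<Inter>((\<lambda>\<Gamma>. setstab M (part_of \<Gamma> \<omega>)) ` E - {setstab M (part_of \<Gamma> \<omega>)}))"
      unfolding set_prod_def using aK mab by blast
  qed
qed

lemma part_B:
  assumes inv: "invariant_cd \<Omega> G E"
  shows "cartesian_system \<Omega> G M \<omega> (cd_to_system M \<omega> E)"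
  unfolding cartesian_system_def cd_to_system_def
proof (intro conjI ballI)
  fix K assume "K \<in> (\<lambda>\<Gamma>. setstab M (part_of \<Gamma> \<omega>)) ` E"
  then show "perm_group \<Omega> K" "K \<subseteq> M" using setstab_pg unfolding setstab_def by auto
next
  fix g K assume g: "g \<in> stab G \<omega>" and K: "K \<in> (\<lambda>\<Gamma>. setstab M (part_of \<Gamma> \<omega>)) ` E"
  then obtain \<Gamma> where G: "\<Gamma> \<in> E" "K = setstab M (part_of \<Gamma> \<omega>)" by auto
  have "act g \<Gamma> \<in> E" using inv_cd_props(3)[OF inv _ G(1)] g unfolding stab_def by auto
  then show "(\<lambda>k. g \<circ> k \<circ> inv g) ` K \<in> (\<lambda>\<Gamma>. setstab M (part_of \<Gamma> \<omega>)) ` E"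
    using sys_conj[OF inv g G(1)] G(2) by simp
next
  show "M \<inter> \<Inter>((\<lambda>\<Gamma>. setstab M (part_of \<Gamma> \<omega>)) ` E) = stab M \<omega>" using sys_inter[OF inv] .
next
  fix K assume "K \<in> (\<lambda>\<Gamma>. setstab M (part_of \<Gamma> \<omega>)) ` E"
  then obtain \<Gamma> where G: "\<Gamma> \<in> E" "K = setstab M (part_of \<Gamma> \<omega>)" by auto
  show "set_prod K (M \<inter> \<Inter>((\<lambda>\<Gamma>. setstab M (part_of \<Gamma> \<omega>)) ` E - {K})) = M"
    using sys_prod[OF inv G(1)] G(2) by simp
qed

end



definition orbw :: "('a \<Rightarrow> 'a) set \<Rightarrow> 'a \<Rightarrow> 'a set" where
  "orbw K w = (\<lambda>k. k w) ` K"

definition Fp :: "('a \<Rightarrow> 'a) set \<Rightarrow> 'a \<Rightarrow> ('a \<Rightarrow> 'a) set \<Rightarrow> 'a set set" where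
  "Fp M w K = (\<lambda>m. m ` orbw K w) ` M"

context itsetup begin

lemma part_C1:
  assumes inv: "invariant_cd \<Omega> G E" and G: "\<Gamma> \<in> E"
  shows "Fp M \<omega> (setstab M (part_of \<Gamma> \<omega>)) = \<Gamma>"
proof -
  note E = inv_cd_props[OF inv]
  have p: "is_partition \<Omega> \<Gamma>" using E(2)[OF G] .
  define \<gamma> where "\<gamma> = part_of \<Gamma> \<omega>"
  have g1: "\<gamma> \<in> \<Gamma>" "\<omega> \<in> \<gamma>" using part_of_in[OF p om] \<gamma>_def by auto
  have orb: "orbw (setstab M \<gamma>) \<omega> = \<gamma>"
  proof
    show "orbw (setstab M \<gamma>) \<omega> \<subseteq> \<gamma>" unfolding orbw_def setstab_def using g1(2) by auto
    show "\<gamma> \<subseteq> orbw (setstab M \<gamma>) \<omega>"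
    proof
      fix x assume x: "x \<in> \<gamma>"
      then have xO: "x \<in> \<Omega>" using partition_sub[OF p g1(1)] by blast
      obtain a where a: "a \<in> M" "a \<omega> = x" using Mtrans[OF om xO] by auto
      have "a ` \<gamma> = part_of \<Gamma> x" using M_part[OF inv a(1) G om] a(2) \<gamma>_def by simp
      also have "\<dots> = \<gamma>" using part_of_eq[OF p g1(1) x] .
      finally have "a \<in> setstab M \<gamma>" using a(1) unfolding setstab_def by simp
      then show "x \<in> orbw (setstab M \<gamma>) \<omega>" unfolding orbw_def using a(2) by blast
    qed
  qed
  show ?thesis unfolding Fp_def \<gamma>_def[symmetric] orb
  proof
    show "(\<lambda>m. m ` \<gamma>) ` M \<subseteq> \<Gamma>"
    proof
      fix z assume "z \<in> (\<lambda>m. m ` \<gamma>) ` M"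
      then obtain m where m: "m \<in> M" "z = m ` \<gamma>" by auto
      have "m ` \<gamma> = part_of \<Gamma> (m \<omega>)" using M_part[OF inv m(1) G om] \<gamma>_def by simp
      then show "z \<in> \<Gamma>" using part_of_in(1)[OF p G_Omega[OF MG'[OF m(1)] om]] m(2) by simp
    qed
    show "\<Gamma> \<subseteq> (\<lambda>m. m ` \<gamma>) ` M"
    proof
      fix \<delta> assume d: "\<delta> \<in> \<Gamma>"
      then have "\<delta> \<noteq> {}" using p unfolding is_partition_def by auto
      then obtain x where x: "x \<in> \<delta>" by auto
      then have xO: "x \<in> \<Omega>" using partition_sub[OF p d] by blast
      obtain a where a: "a \<in> M" "a \<omega> = x" using Mtrans[OF om xO] by auto
      have "a ` \<gamma> = part_of \<Gamma> x" using M_part[OF inv a(1) G om] a(2) \<gamma>_def by simp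
      also have "\<dots> = \<delta>" using part_of_eq[OF p d x] .
      finally show "\<delta> \<in> (\<lambda>m. m ` \<gamma>) ` M" using a(1) by force
    qed
  qed
qed

lemma part_C:
  assumes inv: "invariant_cd \<Omega> G E"
  shows "Fp M \<omega> ` cd_to_system M \<omega> E = E"
proof -
  have "Fp M \<omega> ` cd_to_system M \<omega> E = (\<lambda>\<Gamma>. Fp M \<omega> (setstab M (part_of \<Gamma> \<omega>))) ` E"
    unfolding cd_to_system_def by (simp add: image_image)
  also have "\<dots> = (\<lambda>\<Gamma>. \<Gamma>) ` E" using part_C1[OF inv] by (intro image_cong) auto
  finally show ?thesis by simp
qed

end



context itsetup begin

lemma cs_props:
  assumes cs: "cartesian_system \<Omega> G M \<omega> \<K>"
  shows "\<And>K. K \<in> \<K> \<Longrightarrow> perm_group \<Omega> K"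
    "\<And>K. K \<in> \<K> \<Longrightarrow> K \<subseteq> M"
    "\<And>g K. g \<in> stab G \<omega> \<Longrightarrow> K \<in> \<K> \<Longrightarrow> (\<lambda>k. g \<circ> k \<circ> inv g) ` K \<in> \<K>"
    "M \<inter> \<Inter>\<K> = stab M \<omega>"
    "\<And>K. K \<in> \<K> \<Longrightarrow> set_prod K (M \<inter> \<Inter>(\<K> - {K})) = M"
proof -
  note all = cs[unfolded cartesian_system_def]
  note c1 = conjunct1[OF all]
  note c2 = conjunct1[OF conjunct2[OF all]]
  note c3 = conjunct1[OF conjunct2[OF conjunct2[OF all]]]
  note c4 = conjunct2[OF conjunct2[OF conjunct2[OF all]]]
  show "\<And>K. K \<in> \<K> \<Longrightarrow> perm_group \<Omega> K" using c1 by simp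
  show "\<And>K. K \<in> \<K> \<Longrightarrow> K \<subseteq> M" using c1 by simp
  show "\<And>g K. g \<in> stab G \<omega> \<Longrightarrow> K \<in> \<K> \<Longrightarrow> (\<lambda>k. g \<circ> k \<circ> inv g) ` K \<in> \<K>" using c2 by simp
  show "M \<inter> \<Inter>\<K> = stab M \<omega>" using c3 .
  show "\<And>K. K \<in> \<K> \<Longrightarrow> set_prod K (M \<inter> \<Inter>(\<K> - {K})) = M" using c4 by simp
qed

lemma stab_sub:
  assumes cs: "cartesian_system \<Omega> G M \<omega> \<K>" and K: "K \<in> \<K>"
  shows "stab M \<omega> \<subseteq> K"
  using cs_props(4)[OF cs] K by blast

lemma blk1:
  assumes cs: "cartesian_system \<Omega> G M \<omega> \<K>" and K: "K \<in> \<K>" and a: "a \<in> M" and b: "b \<in> M"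
    and ne: "a ` orbw K \<omega> \<inter> b ` orbw K \<omega> \<noteq> {}"
  shows "inv b \<circ> a \<in> K"
proof -
  note C = cs_props[OF cs]
  have pK: "perm_group \<Omega> K" using C(1)[OF K] .
  have KM: "K \<subseteq> M" using C(2)[OF K] .
  obtain k1 k2 where k: "k1 \<in> K" "k2 \<in> K" "a (k1 \<omega>) = b (k2 \<omega>)"
    using ne unfolding orbw_def by auto
  have k1M: "k1 \<in> M" and k2M: "k2 \<in> M" using k KM by auto
  define h where "h = inv k2 \<circ> inv b \<circ> a \<circ> k1"
  have hM: "h \<in> M" unfolding h_def using M_comp M_inv_in k1M k2M a b by simp
  have "h \<omega> = inv k2 (inv b (b (k2 \<omega>)))" unfolding h_def using k(3) by simp
  also have "\<dots> = \<omega>" using MG'[OF b] MG'[OF k2M] by simp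
  finally have "h \<in> K" using stab_sub[OF cs K] hM unfolding stab_def by auto
  moreover have "inv b \<circ> a = k2 \<circ> h \<circ> inv k1"
  proof -
    have "k2 \<circ> h \<circ> inv k1 = (k2 \<circ> inv k2) \<circ> inv b \<circ> a \<circ> (k1 \<circ> inv k1)"
      unfolding h_def by (simp add: comp_assoc)
    then show ?thesis using MG'[OF k1M] MG'[OF k2M] by simp
  qed
  ultimately show ?thesis using pg_comp[OF pK] pg_inv[OF pK] k(1,2) by metis
qed

lemma orbw_K:
  assumes pK: "perm_group \<Omega> K" and k: "k \<in> K"
  shows "k ` orbw K \<omega> = orbw K \<omega>"
proof
  show "k ` orbw K \<omega> \<subseteq> orbw K \<omega>"
  proof
    fix x assume "x \<in> k ` orbw K \<omega>"
    then obtain k' where "k' \<in> K" "x = k (k' \<omega>)" unfolding orbw_def by auto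
    then have "x = (k \<circ> k') \<omega>" "k \<circ> k' \<in> K" using pg_comp[OF pK k] by auto
    then show "x \<in> orbw K \<omega>" unfolding orbw_def by blast
  qed
  show "orbw K \<omega> \<subseteq> k ` orbw K \<omega>"
  proof
    fix x assume "x \<in> orbw K \<omega>"
    then obtain k' where k': "k' \<in> K" "x = k' \<omega>" unfolding orbw_def by auto
    have kp: "k permutes \<Omega>" using pg_perm[OF pK k] .
    have "x = k ((inv k \<circ> k') \<omega>)" using k' permutes_inverses(1)[OF kp] by simp
    moreover have "inv k \<circ> k' \<in> K" using pg_comp[OF pK pg_inv[OF pK k] k'(1)] .
    ultimately show "x \<in> k ` orbw K \<omega>" unfolding orbw_def by blast
  qed
qed

lemma blk2:
  assumes cs: "cartesian_system \<Omega> G M \<omega> \<K>" and K: "K \<in> \<K>" and a: "a \<in> M" and b: "b \<in> M"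
    and k: "inv b \<circ> a \<in> K"
  shows "a ` orbw K \<omega> = b ` orbw K \<omega>"
proof -
  have "a = b \<circ> (inv b \<circ> a)" using MG'[OF b] by (simp add: comp_assoc[symmetric])
  then have "a ` orbw K \<omega> = b ` ((inv b \<circ> a) ` orbw K \<omega>)" by (metis image_comp)
  then show ?thesis using orbw_K[OF cs_props(1)[OF cs K] k] by simp
qed

lemma om_orbw: "perm_group \<Omega> K \<Longrightarrow> \<omega> \<in> orbw K \<omega>"
  unfolding orbw_def using pg_id by (metis id_apply image_eqI)

lemma orbw_sub: "perm_group \<Omega> K \<Longrightarrow> orbw K \<omega> \<subseteq> \<Omega>"
  unfolding orbw_def using pg_perm permutes_in_image om by fastforce

lemma Fp_partition:
  assumes cs: "cartesian_system \<Omega> G M \<omega> \<K>" and K: "K \<in> \<K>"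
  shows "is_partition \<Omega> (Fp M \<omega> K)"
  unfolding is_partition_def
proof (intro conjI ballI impI)
  have pK: "perm_group \<Omega> K" using cs_props(1)[OF cs K] .
  show "\<Union>(Fp M \<omega> K) = \<Omega>"
  proof
    show "\<Union>(Fp M \<omega> K) \<subseteq> \<Omega>"
    proof
      fix x assume "x \<in> \<Union>(Fp M \<omega> K)"
      then obtain a where a: "a \<in> M" "x \<in> a ` orbw K \<omega>" unfolding Fp_def by auto
      then obtain y where y: "y \<in> orbw K \<omega>" "x = a y" by auto
      show "x \<in> \<Omega>" using G_Omega[OF MG'[OF a(1)]] orbw_sub[OF pK] y by auto
    qed
    show "\<Omega> \<subseteq> \<Union>(Fp M \<omega> K)"
    proof
      fix x assume "x \<in> \<Omega>"
      then obtain a where a: "a \<in> M" "a \<omega> = x" using Mtrans[OF om] by blast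
      then have "x \<in> a ` orbw K \<omega>" using om_orbw[OF pK] by blast
      then show "x \<in> \<Union>(Fp M \<omega> K)" unfolding Fp_def using a(1) by blast
    qed
  qed
  show "{} \<notin> Fp M \<omega> K"
  proof
    assume "{} \<in> Fp M \<omega> K"
    then obtain a where "{} = a ` orbw K \<omega>" unfolding Fp_def by auto
    then show False using om_orbw[OF pK] by auto
  qed
  fix A B assume A: "A \<in> Fp M \<omega> K" and B: "B \<in> Fp M \<omega> K" and AB: "A \<noteq> B"
  show "A \<inter> B = {}"
  proof (rule ccontr)
    assume ne: "A \<inter> B \<noteq> {}"
    obtain a where a: "a \<in> M" "A = a ` orbw K \<omega>" using A unfolding Fp_def by auto
    obtain b where b: "b \<in> M" "B = b ` orbw K \<omega>" using B unfolding Fp_def by auto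
    note ab = a(1) b(1) a(2) b(2)
    have "inv b \<circ> a \<in> K" using blk1[OF cs K ab(1,2)] ne ab(3,4) by simp
    then have "A = B" using blk2[OF cs K ab(1,2)] ab(3,4) by simp
    then show False using AB by simp
  qed
qed

lemma Fp_part_of:
  assumes cs: "cartesian_system \<Omega> G M \<omega> \<K>" and K: "K \<in> \<K>"
  shows "part_of (Fp M \<omega> K) \<omega> = orbw K \<omega>"
proof (rule part_of_eq[OF Fp_partition[OF cs K]])
  show "orbw K \<omega> \<in> Fp M \<omega> K" unfolding Fp_def by (rule rev_image_eqI[OF M_id]) simp
  show "\<omega> \<in> orbw K \<omega>" using om_orbw[OF cs_props(1)[OF cs K]] .
qed

lemma Fp_setstab:
  assumes cs: "cartesian_system \<Omega> G M \<omega> \<K>" and K: "K \<in> \<K>"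
  shows "setstab M (part_of (Fp M \<omega> K) \<omega>) = K"
  unfolding Fp_part_of[OF cs K]
proof
  have pK: "perm_group \<Omega> K" using cs_props(1)[OF cs K] .
  show "setstab M (orbw K \<omega>) \<subseteq> K"
  proof
    fix m assume "m \<in> setstab M (orbw K \<omega>)"
    then have m: "m \<in> M" "m ` orbw K \<omega> = orbw K \<omega>" unfolding setstab_def by auto
    have "m ` orbw K \<omega> \<inter> id ` orbw K \<omega> \<noteq> {}" using m(2) om_orbw[OF pK] by auto
    then have "inv id \<circ> m \<in> K" using blk1[OF cs K m(1) M_id] by simp
    then show "m \<in> K" by (simp add: inv_id)
  qed
  show "K \<subseteq> setstab M (orbw K \<omega>)"
    using orbw_K[OF pK] cs_props(2)[OF cs K] unfolding setstab_def by auto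
qed

lemma part_D_sys:
  assumes cs: "cartesian_system \<Omega> G M \<omega> \<K>"
  shows "cd_to_system M \<omega> (Fp M \<omega> ` \<K>) = \<K>"
proof -
  have "cd_to_system M \<omega> (Fp M \<omega> ` \<K>) = (\<lambda>K. setstab M (part_of (Fp M \<omega> K) \<omega>)) ` \<K>"
    unfolding cd_to_system_def by (simp add: image_image)
  also have "\<dots> = (\<lambda>K. K) ` \<K>" using Fp_setstab[OF cs] by (intro image_cong) auto
  finally show ?thesis by simp
qed

end



context itsetup begin

lemma Fp_invariant:
  assumes cs: "cartesian_system \<Omega> G M \<omega> \<K>" and g: "g \<in> G" and K: "K \<in> \<K>"
  shows "act g (Fp M \<omega> K) \<in> Fp M \<omega> ` \<K>"
proof -
  have gO: "g \<omega> \<in> \<Omega>" using G_Omega[OF g om] .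
  obtain m0 where m0: "m0 \<in> M" "m0 \<omega> = g \<omega>" using Mtrans[OF om gO] by auto
  have m0G: "m0 \<in> G" using MG'[OF m0(1)] .
  define g0 where "g0 = inv m0 \<circ> g"
  have g0G: "g0 \<in> G" unfolding g0_def using G_comp[OF G_inv_in[OF m0G] g] .
  have "g0 \<omega> = inv m0 (m0 \<omega>)" unfolding g0_def using m0(2) by simp
  then have g0w: "g0 \<omega> = \<omega>" using G_inv3[OF m0G] by simp
  have g0iw: "inv g0 \<omega> = \<omega>" using G_inv3[OF g0G, of \<omega>] g0w by simp
  have gm0: "g = m0 \<circ> g0" unfolding g0_def using m0G by (simp add: comp_assoc[symmetric])
  define K' where "K' = (\<lambda>k. g0 \<circ> k \<circ> inv g0) ` K"
  have K': "K' \<in> \<K>" unfolding K'_def using cs_props(3)[OF cs _ K] g0G g0w unfolding stab_def by auto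
  have orb: "orbw K' \<omega> = g0 ` orbw K \<omega>"
    unfolding K'_def orbw_def image_image using g0iw by (simp add: image_comp)
  define \<psi> where "\<psi> m = g \<circ> m \<circ> inv g0" for m
  have \<psi>M: "\<psi> m \<in> M" if "m \<in> M" for m
  proof -
    have "\<psi> m = m0 \<circ> (g0 \<circ> m \<circ> inv g0)" unfolding \<psi>_def gm0 by (simp add: comp_assoc)
    then show ?thesis using M_comp[OF m0(1) Mnormal[OF g0G that]] by simp
  qed
  have \<psi>surj: "\<psi> ` M = M"
  proof
    show "\<psi> ` M \<subseteq> M" using \<psi>M by auto
    show "M \<subseteq> \<psi> ` M"
    proof
      fix m' assume m': "m' \<in> M"
      define m where "m = inv g0 \<circ> (inv m0 \<circ> m') \<circ> g0"
      have mM: "m \<in> M" unfolding m_def using Mnormal'[OF g0G M_comp[OF M_inv_in[OF m0(1)] m']] .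
      have "\<psi> m = (m0 \<circ> (g0 \<circ> inv g0)) \<circ> inv m0 \<circ> m' \<circ> (g0 \<circ> inv g0)"
        unfolding \<psi>_def m_def gm0 by (simp add: comp_assoc)
      also have "\<dots> = m'" using g0G m0G by simp
      finally show "m' \<in> \<psi> ` M" using mM by force
    qed
  qed
  have blk: "g ` (m ` orbw K \<omega>) = \<psi> m ` orbw K' \<omega>" for m
  proof -
    have "\<psi> m ` orbw K' \<omega> = (\<psi> m \<circ> g0) ` orbw K \<omega>" unfolding orb by (simp add: image_comp)
    also have "\<psi> m \<circ> g0 = g \<circ> m \<circ> (inv g0 \<circ> g0)" unfolding \<psi>_def by (simp add: comp_assoc)
    also have "\<dots> = g \<circ> m" using g0G by simp
    finally show ?thesis by (simp add: image_comp)
  qed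
  have "act g (Fp M \<omega> K) = (\<lambda>m. g ` (m ` orbw K \<omega>)) ` M"
    unfolding act_def Fp_def by (rule image_image)
  also have "\<dots> = (\<lambda>m. \<psi> m ` orbw K' \<omega>) ` M"
    by (rule image_cong[OF refl blk])
  also have "\<dots> = (\<lambda>m'. m' ` orbw K' \<omega>) ` (\<psi> ` M)" by (rule image_image[symmetric])
  also have "\<dots> = Fp M \<omega> K'" unfolding \<psi>surj Fp_def ..
  finally show ?thesis using K' by simp
qed

lemma finK:
  assumes cs: "cartesian_system \<Omega> G M \<omega> \<K>"
  shows "finite \<K>"
proof -
  have "\<K> \<subseteq> Pow M" using cs_props(2)[OF cs] by blast
  then show ?thesis using finM finite_subset by blast
qed

lemma crt:
  assumes cs: "cartesian_system \<Omega> G M \<omega> \<K>" and mk: "\<And>K. K \<in> \<K> \<Longrightarrow> mk K \<in> M"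
  shows "\<exists>m\<in>M. \<forall>K\<in>\<K>. inv (mk K) \<circ> m \<in> K"
proof -
  have "\<exists>m\<in>M. \<forall>K\<in>S. inv (mk K) \<circ> m \<in> K" if "finite S" "S \<subseteq> \<K>" for S
    using that
  proof (induction S rule: finite_induct)
    case empty
    then show ?case using M_id by blast
  next
    case (insert K0 S)
    have SK: "S \<subseteq> \<K>" and K0: "K0 \<in> \<K>" and K0S: "K0 \<notin> S" using insert.prems insert.hyps by auto
    obtain m where m: "m \<in> M" "\<forall>K\<in>S. inv (mk K) \<circ> m \<in> K" using insert.IH[OF SK] by blast
    have mk0: "mk K0 \<in> M" using mk[OF K0] .
    define z where "z = inv m \<circ> mk K0"
    have zM: "z \<in> M" unfolding z_def using M_comp[OF M_inv_in[OF m(1)] mk0] .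
    have "inv z \<in> set_prod K0 (M \<inter> \<Inter>(\<K> - {K0}))" using cs_props(5)[OF cs K0] M_inv_in[OF zM] by simp
    then obtain k w where kw: "inv z = k \<circ> w" "k \<in> K0" "w \<in> M \<inter> \<Inter>(\<K> - {K0})"
      unfolding set_prod_def by blast
    define y where "y = inv w"
    have wM: "w \<in> M" using kw(3) by simp
    have yM: "y \<in> M" unfolding y_def using M_inv_in[OF wM] .
    have yK: "y \<in> K" if "K \<in> S" for K
    proof -
      have "K \<in> \<K> - {K0}" using that SK K0S by auto
      then have "w \<in> K" using kw(3) by auto
      then show ?thesis unfolding y_def using pg_inv[OF cs_props(1)[OF cs]] SK that by auto
    qed
    have "m \<circ> y \<in> M" using M_comp[OF m(1) yM] .
    moreover have "\<forall>K\<in>insert K0 S. inv (mk K) \<circ> (m \<circ> y) \<in> K"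
    proof
      fix K assume "K \<in> insert K0 S"
      then consider "K = K0" | "K \<in> S" by auto
      then show "inv (mk K) \<circ> (m \<circ> y) \<in> K"
      proof cases
        case 1
        have "inv z = inv (mk K0) \<circ> inv (inv m)" unfolding z_def
          using o_inv_distrib[OF permutes_bij[OF G_perm[OF G_inv_in[OF MG'[OF m(1)]]]]
                  permutes_bij[OF G_perm[OF MG'[OF mk0]]]] .
        then have "inv z = inv (mk K0) \<circ> m" using MG'[OF m(1)] by simp
        then have "inv (mk K0) \<circ> (m \<circ> y) = k \<circ> (w \<circ> inv w)" using kw(1) unfolding y_def by (simp add: comp_assoc[symmetric])
        then show ?thesis using 1 kw(2) MG'[OF wM] by simp
      next
        case 2
        have "inv (mk K) \<circ> (m \<circ> y) = (inv (mk K) \<circ> m) \<circ> y" by (simp add: comp_assoc)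
        then show ?thesis using pg_comp[OF cs_props(1)[OF cs] m(2)[rule_format, OF 2] yK[OF 2]]
          SK 2 by auto
      qed
    qed
    ultimately show ?case by blast
  qed
  then show ?thesis using finK[OF cs] by simp
qed

end



context itsetup begin

lemma Fp_cd:
  assumes cs: "cartesian_system \<Omega> G M \<omega> \<K>"
  shows "invariant_cd \<Omega> G (Fp M \<omega> ` \<K>)"
proof -
  have fin: "finite (Fp M \<omega> ` \<K>)" using finK[OF cs] by simp
  have parts: "\<forall>\<Gamma>\<in>Fp M \<omega> ` \<K>. is_partition \<Omega> \<Gamma>" using Fp_partition[OF cs] by blast
  have invar: "\<forall>g\<in>G. \<forall>\<Gamma>\<in>Fp M \<omega> ` \<K>. (\<lambda>\<gamma>. g ` \<gamma>) ` \<Gamma> \<in> Fp M \<omega> ` \<K>"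
  proof (intro ballI)
    fix g \<Gamma> assume g: "g \<in> G" and "\<Gamma> \<in> Fp M \<omega> ` \<K>"
    then obtain K where K: "K \<in> \<K>" "\<Gamma> = Fp M \<omega> K" by blast
    show "(\<lambda>\<gamma>. g ` \<gamma>) ` \<Gamma> \<in> Fp M \<omega> ` \<K>" using Fp_invariant[OF cs g K(1)] K(2) unfolding act_def by simp
  qed
  have one: "\<forall>c. (\<forall>\<Gamma>\<in>Fp M \<omega> ` \<K>. c \<Gamma> \<in> \<Gamma>) \<longrightarrow> card (\<Omega> \<inter> (\<Inter>\<Gamma>\<in>Fp M \<omega> ` \<K>. c \<Gamma>)) = 1"
  proof (intro allI impI)
    fix c assume c: "\<forall>\<Gamma>\<in>Fp M \<omega> ` \<K>. c \<Gamma> \<in> \<Gamma>"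
    have ck: "\<exists>m. m \<in> M \<and> c (Fp M \<omega> K) = m ` orbw K \<omega>" if K: "K \<in> \<K>" for K
    proof -
      have "c (Fp M \<omega> K) \<in> Fp M \<omega> K" using c K by blast
      then show ?thesis unfolding Fp_def by blast
    qed
    define mk where "mk K = (SOME m. m \<in> M \<and> c (Fp M \<omega> K) = m ` orbw K \<omega>)" for K
    have mk: "mk K \<in> M \<and> c (Fp M \<omega> K) = mk K ` orbw K \<omega>" if K: "K \<in> \<K>" for K
      unfolding mk_def using someI_ex[OF ck[OF K]] .
    obtain m where m: "m \<in> M" "\<forall>K\<in>\<K>. inv (mk K) \<circ> m \<in> K" using crt[OF cs] mk by blast
    have mem: "x \<in> \<Omega> \<inter> (\<Inter>\<Gamma>\<in>Fp M \<omega> ` \<K>. c \<Gamma>) \<longleftrightarrow> x \<in> \<Omega> \<and> (\<forall>K\<in>\<K>. x \<in> c (Fp M \<omega> K))" for x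
      by simp
    have ex: "m \<omega> \<in> \<Omega> \<inter> (\<Inter>\<Gamma>\<in>Fp M \<omega> ` \<K>. c \<Gamma>)"
      unfolding mem
    proof (intro conjI ballI)
      show "m \<omega> \<in> \<Omega>" using G_Omega[OF MG'[OF m(1)] om] .
      fix K assume K: "K \<in> \<K>"
      have "c (Fp M \<omega> K) = mk K ` orbw K \<omega>" using mk[OF K] by simp
      also have "\<dots> = m ` orbw K \<omega>" using blk2[OF cs K m(1) conjunct1[OF mk[OF K]]] m(2) K by simp
      finally show "m \<omega> \<in> c (Fp M \<omega> K)" using om_orbw[OF cs_props(1)[OF cs K]] by simp
    qed
    have uq: "y = m \<omega>" if y: "y \<in> \<Omega> \<inter> (\<Inter>\<Gamma>\<in>Fp M \<omega> ` \<K>. c \<Gamma>)" for y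
    proof -
      have yO: "y \<in> \<Omega>" and yK: "\<And>K. K \<in> \<K> \<Longrightarrow> y \<in> c (Fp M \<omega> K)" using y unfolding mem by auto
      obtain b where b: "b \<in> M" "b \<omega> = y" using Mtrans[OF om yO] by auto
      have "inv m \<circ> b \<in> K" if K: "K \<in> \<K>" for K
      proof -
        have pK: "perm_group \<Omega> K" using cs_props(1)[OF cs K] .
        have mkK: "mk K \<in> M" using mk[OF K] by simp
        have "y \<in> mk K ` orbw K \<omega>" using yK[OF K] mk[OF K] by simp
        moreover have "y \<in> b ` orbw K \<omega>" using b(2) om_orbw[OF pK] by blast
        ultimately have "inv (mk K) \<circ> b \<in> K" using blk1[OF cs K b(1) mkK] by blast
        then have "b ` orbw K \<omega> = mk K ` orbw K \<omega>" using blk2[OF cs K b(1) mkK] by simp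
        also have "\<dots> = m ` orbw K \<omega>" using blk2[OF cs K m(1) mkK] m(2) K by simp
        finally have "b ` orbw K \<omega> \<inter> m ` orbw K \<omega> \<noteq> {}" using om_orbw[OF pK] by auto
        then show ?thesis using blk1[OF cs K b(1) m(1)] by blast
      qed
      moreover have "inv m \<circ> b \<in> M" using M_comp[OF M_inv_in[OF m(1)] b(1)] .
      ultimately have "inv m \<circ> b \<in> M \<inter> \<Inter>\<K>" by blast
      then have "inv m (b \<omega>) = \<omega>" using cs_props(4)[OF cs] unfolding stab_def by auto
      then have "m (inv m (b \<omega>)) = m \<omega>" by simp
      then show "y = m \<omega>" using b(2) MG'[OF m(1)] by simp
    qed
    have "\<Omega> \<inter> (\<Inter>\<Gamma>\<in>Fp M \<omega> ` \<K>. c \<Gamma>) = {m \<omega>}" using ex uq by blast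
    then show "card (\<Omega> \<inter> (\<Inter>\<Gamma>\<in>Fp M \<omega> ` \<K>. c \<Gamma>)) = 1" by simp
  qed
  show ?thesis unfolding invariant_cd_def cartesian_decomposition_def
    by (intro conjI fin parts one invar)
qed

end



theorem theorem3p3:
  fixes \<Omega> :: "'a set" and G M :: "('a \<Rightarrow> 'a) set" and \<omega> :: 'a
  assumes "finite \<Omega>"
    and "innately_transitive \<Omega> G"
    and "plinth \<Omega> G M"
    and "\<omega> \<in> \<Omega>"
  shows "(\<forall>E \<in> invariant_cds \<Omega> G. cartesian_system \<Omega> G M \<omega> (cd_to_system M \<omega> E)) \<and>
         bij_betw (cd_to_system M \<omega>) (invariant_cds \<Omega> G) (cartesian_systems \<Omega> G M \<omega>)"
proof -
  have pg: "perm_group \<Omega> G" using assms(2) unfolding innately_transitive_def by simp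
  interpret itsetup \<Omega> G M \<omega> using assms(1,3,4) pg by unfold_locales auto
  have A: "\<forall>E \<in> invariant_cds \<Omega> G. cartesian_system \<Omega> G M \<omega> (cd_to_system M \<omega> E)"
    unfolding invariant_cds_def using part_B by blast
  have inj: "inj_on (cd_to_system M \<omega>) (invariant_cds \<Omega> G)"
  proof (rule inj_onI)
    fix E1 E2 assume e: "E1 \<in> invariant_cds \<Omega> G" "E2 \<in> invariant_cds \<Omega> G"
      "cd_to_system M \<omega> E1 = cd_to_system M \<omega> E2"
    have "E1 = Fp M \<omega> ` cd_to_system M \<omega> E1" using part_C e(1) unfolding invariant_cds_def by simp
    also have "\<dots> = Fp M \<omega> ` cd_to_system M \<omega> E2" using e(3) by simp
    also have "\<dots> = E2" using part_C e(2) unfolding invariant_cds_def by simp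
    finally show "E1 = E2" .
  qed
  have img: "cd_to_system M \<omega> ` invariant_cds \<Omega> G = cartesian_systems \<Omega> G M \<omega>"
  proof
    show "cd_to_system M \<omega> ` invariant_cds \<Omega> G \<subseteq> cartesian_systems \<Omega> G M \<omega>"
      using A unfolding cartesian_systems_def by blast
    show "cartesian_systems \<Omega> G M \<omega> \<subseteq> cd_to_system M \<omega> ` invariant_cds \<Omega> G"
    proof
      fix K assume "K \<in> cartesian_systems \<Omega> G M \<omega>"
      then have cs: "cartesian_system \<Omega> G M \<omega> K" unfolding cartesian_systems_def by simp
      have "Fp M \<omega> ` K \<in> invariant_cds \<Omega> G" using Fp_cd[OF cs] unfolding invariant_cds_def by simp
      moreover have "K = cd_to_system M \<omega> (Fp M \<omega> ` K)" using part_D_sys[OF cs] by simp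
      ultimately show "K \<in> cd_to_system M \<omega> ` invariant_cds \<Omega> G" by blast
    qed
  qed
  show ?thesis using A inj img unfolding bij_betw_def by blast
qed


end
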